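(* Fix integers $K\ge1$, $N\ge1$, $d\in[0,1]$, and an arbitrary distribution of the input $\mathbf X\in\{1,\dots,2K\}^N$ of the $2K$-ary i.i.d. deletion channel with deletion probability $d$. With the decomposition $(\mathbf X_1,\dots,\mathbf X_K,\mathbf F_x)$, $(\mathbf Y_1,\dots,\mathbf Y_K,\mathbf F_y)$ described in the context, for every $k\in\{1,\dots,K\}$, $$I(\mathbf X_1,\dots,\mathbf X_K,\mathbf F_x;\mathbf Y_k\mid \mathbf Y_1,\dots,\mathbf Y_{k-1})\le \mathbb E\{N_k\}\,C_2(d)+2\log(N+1),$$ where $C_2(d)$ is the capacity of the binary i.i.d. deletion channel with deletion probability $d$.
   Context: The $2K$-ary i.i.d. deletion channel with deletion probability $d$: an input $\mathbf X=(x_1,\dots,x_N)\in\{1,\dots,2K\}^N$ is sent; each symbol is independently (and independently of $\mathbf X$) deleted with probability $d$ or delivered unchanged with probability $1-d$; the output $\mathbf Y=(y_1,\dots,y_M)$ is the subsequence of surviving symbols in order. The binary i.i.d. deletion channel is the same with alphabet of size 2, and its capacity is $C_2(d)=\lim_{N\to\infty}\max_{P(\mathbf X)}\frac1N I(\mathbf X;\mathbf Y)$. Decomposition: for $k\in\{1,\dots,K\}$ the $k$-th subchannel carries the symbols $2k-1$ and $2k$. Let $\mathbf X_k$ be the subsequence of $\mathbf X$ consisting of the symbols lying in $\{2k-1,2k\}$ (a binary sequence), of length $N_k$, and $\mathbf Y_k$ the subsequence of $\mathbf Y$ consisting of the symbols lying in $\{2k-1,2k\}$, of length $M_k$; thus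 $\mathbf Y_k$ is the output of a binary i.i.d. deletion channel with deletion probability $d$ and input $\mathbf X_k$. Let $\mathbf F_x=(f_x[1],\dots,f_x[N])$ and $\mathbf F_y=(f_y[1],\dots,f_y[M])$ where $f_x[n]=\lceil x_n/2\rceil$ and $f_y[m]=\lceil y_m/2\rceil$ are the subchannel labels. Then $\mathbf X\leftrightarrow(\mathbf X_1,\dots,\mathbf X_K,\mathbf F_x)$ and $\mathbf Y\leftrightarrow(\mathbf Y_1,\dots,\mathbf Y_K,\mathbf F_y)$ are bijective correspondences. All logarithms are to a common base. *)

theory Defs
  imports "HOL-Probability.Probability"
begin

fun del_chan :: "real \<Rightarrow> 'a list \<Rightarrow> 'a list pmf" where
  "del_chan d [] = return_pmf []"
| "del_chan d (x # xs) =
     bind_pmf (bernoulli_pmf (1 - d)) (\<lambda>keep.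
     bind_pmf (del_chan d xs) (\<lambda>ys.
     return_pmf (if keep then x # ys else ys)))"

definition chan_joint :: "real \<Rightarrow> 'a list pmf \<Rightarrow> ('a list \<times> 'a list) pmf" where
  "chan_joint d P = bind_pmf P (\<lambda>x. map_pmf (\<lambda>y. (x, y)) (del_chan d x))"

definition cond_mutual_info ::
  "real \<Rightarrow> 'w pmf \<Rightarrow> ('w \<Rightarrow> 'a) \<Rightarrow> ('w \<Rightarrow> 'b) \<Rightarrow> ('w \<Rightarrow> 'c) \<Rightarrow> real" where
  "cond_mutual_info b J A B C =
     (let pABC = map_pmf (\<lambda>w. (A w, B w, C w)) J;
          pAC = map_pmf (\<lambda>w. (A w, C w)) J;
          pBC = map_pmf (\<lambda>w. (B w, C w)) J;
          pC = map_pmf C J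
      in (\<Sum>t \<in> set_pmf pABC. case t of (a, bb, c) \<Rightarrow>
            pmf pABC (a, bb, c) *
            log b ((pmf pABC (a, bb, c) * pmf pC c) / (pmf pAC (a, c) * pmf pBC (bb, c)))))"

definition mutual_info :: "real \<Rightarrow> 'w pmf \<Rightarrow> ('w \<Rightarrow> 'a) \<Rightarrow> ('w \<Rightarrow> 'b) \<Rightarrow> real" where
  "mutual_info b J A B = cond_mutual_info b J A B (\<lambda>_. ())"

definition bin_del_max_info :: "real \<Rightarrow> real \<Rightarrow> nat \<Rightarrow> real" where
  "bin_del_max_info b d n =
     (SUP P \<in> {P :: bool list pmf. set_pmf P \<subseteq> {xs. length xs = n}}.
        mutual_info b (chan_joint d P) fst snd)"

definition C2 :: "real \<Rightarrow> real \<Rightarrow> real" where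
  "C2 b d = lim (\<lambda>n. bin_del_max_info b d n / real n)"

definition sublabel :: "nat \<Rightarrow> nat" where
  "sublabel s = (s + 1) div 2"

definition subseq_k :: "nat \<Rightarrow> nat list \<Rightarrow> nat list" where
  "subseq_k k xs = filter (\<lambda>s. sublabel s = k) xs"

definition labels :: "nat list \<Rightarrow> nat list" where
  "labels xs = map sublabel xs"

end

theory Submission
  imports Defs
begin


definition E :: "'a pmf \<Rightarrow> ('a \<Rightarrow> real) \<Rightarrow> real" where
  "E p f = (\<Sum>x\<in>set_pmf p. pmf p x * f x)"

definition Hp :: "real \<Rightarrow> 'a pmf \<Rightarrow> real" where
  "Hp b p = - E p (\<lambda>x. log b (pmf p x))"

lemma E_integral: "finite (set_pmf p) \<Longrightarrow> E p f = measure_pmf.expectation p f"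
  unfolding E_def by (subst integral_measure_pmf_real[of "set_pmf p"]) (auto simp: mult.commute)

lemma E_map: "finite (set_pmf p) \<Longrightarrow> E (map_pmf g p) f = E p (\<lambda>x. f (g x))"
  by (simp add: E_integral)

lemma E_cong: "(\<And>x. x \<in> set_pmf p \<Longrightarrow> f x = g x) \<Longrightarrow> E p f = E p g"
  unfolding E_def by (rule sum.cong) auto

lemma E_add: "E p (\<lambda>x. f x + g x) = E p f + E p g"
  unfolding E_def by (simp add: distrib_left sum.distrib)

lemma E_diff: "E p (\<lambda>x. f x - g x) = E p f - E p g"
  unfolding E_def by (simp add: right_diff_distrib sum_subtractf)

lemma E_cmult: "E p (\<lambda>x. c * f x) = c * E p f"
  unfolding E_def by (simp add: sum_distrib_left mult_ac)

lemma E_neg: "E p (\<lambda>x. - f x) = - E p f"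
  unfolding E_def by (simp add: sum_negf)

lemma E_mono: "(\<And>x. x \<in> set_pmf p \<Longrightarrow> f x \<le> g x) \<Longrightarrow> E p f \<le> E p g"
  unfolding E_def by (rule sum_mono) (auto intro: mult_left_mono)

lemma E_const: "finite (set_pmf p) \<Longrightarrow> E p (\<lambda>x. c) = c"
  unfolding E_def by (simp add: sum_distrib_right[symmetric] sum_pmf_eq_1)

lemma E_return[simp]: "E (return_pmf a) f = f a"
  unfolding E_def by simp

lemma finite_set_bind:
  "finite (set_pmf p) \<Longrightarrow> (\<And>x. x \<in> set_pmf p \<Longrightarrow> finite (set_pmf (R x))) \<Longrightarrow> finite (set_pmf (bind_pmf p R))"
  by (simp add: set_bind_pmf)

lemma E_bind:
  assumes fp: "finite (set_pmf p)" and fR: "\<And>x. x \<in> set_pmf p \<Longrightarrow> finite (set_pmf (R x))"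
  shows "E (bind_pmf p R) f = E p (\<lambda>x. E (R x) f)"
proof -
  let ?S = "set_pmf (bind_pmf p R)"
  have fS: "finite ?S" using finite_set_bind[OF fp fR] .
  have "E (bind_pmf p R) f = (\<Sum>z\<in>?S. (\<Sum>x\<in>set_pmf p. pmf p x * pmf (R x) z) * f z)"
    unfolding E_def pmf_bind by (rule sum.cong) (auto simp: E_integral[OF fp, symmetric] E_def)
  also have "\<dots> = (\<Sum>x\<in>set_pmf p. pmf p x * (\<Sum>z\<in>?S. pmf (R x) z * f z))"
    unfolding sum_distrib_left sum_distrib_right by (subst sum.swap) (simp add: mult_ac)
  also have "\<dots> = (\<Sum>x\<in>set_pmf p. pmf p x * E (R x) f)"
  proof (rule sum.cong)
    fix x assume x: "x \<in> set_pmf p"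
    have "(\<Sum>z\<in>?S. pmf (R x) z * f z) = (\<Sum>z\<in>set_pmf (R x). pmf (R x) z * f z)"
      by (rule sum.mono_neutral_right) (use fS x in \<open>auto simp: set_bind_pmf pmf_eq_0_set_pmf\<close>)
    then show "pmf p x * (\<Sum>z\<in>?S. pmf (R x) z * f z) = pmf p x * E (R x) f" by (simp add: E_def)
  qed simp
  finally show ?thesis by (simp add: E_def)
qed

lemma E_nonneg: "(\<And>x. x \<in> set_pmf p \<Longrightarrow> 0 \<le> f x) \<Longrightarrow> 0 \<le> E p f"
  using E_mono[of p "\<lambda>_. 0" f] by (simp add: E_def)


lemma pmf_map_pos: "w \<in> set_pmf J \<Longrightarrow> 0 < pmf (map_pmf V J) (V w)"
  using pmf_positive[of "V w" "map_pmf V J"] by auto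

lemma Hp_map_expect: "finite (set_pmf J) \<Longrightarrow>
  Hp b (map_pmf V J) = - E J (\<lambda>w. log b (pmf (map_pmf V J) (V w)))"
  unfolding Hp_def by (simp add: E_map)

lemma pmf_map_mono:
  assumes "w \<in> set_pmf J" "\<And>w'. w' \<in> set_pmf J \<Longrightarrow> V w' = V w \<Longrightarrow> U w' = U w"
  shows "pmf (map_pmf V J) (V w) \<le> pmf (map_pmf U J) (U w)"
proof -
  have "measure J (V -` {V w}) = measure J (V -` {V w} \<inter> set_pmf J)"
    by (simp add: measure_Int_set_pmf)
  also have "\<dots> \<le> measure J (U -` {U w} \<inter> set_pmf J)"
    by (rule measure_pmf.finite_measure_mono) (use assms in blast, simp)
  also have "\<dots> = measure J (U -` {U w})"
    by (simp add: measure_Int_set_pmf)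
  finally show ?thesis by (simp add: pmf_map)
qed

lemma Hp_mono_fun:
  assumes fin: "finite (set_pmf J)" and b: "b > 1"
    and fn: "\<And>w w'. w \<in> set_pmf J \<Longrightarrow> w' \<in> set_pmf J \<Longrightarrow> V w' = V w \<Longrightarrow> U w' = U w"
  shows "Hp b (map_pmf U J) \<le> Hp b (map_pmf V J)"
proof -
  have "E J (\<lambda>w. log b (pmf (map_pmf V J) (V w))) \<le> E J (\<lambda>w. log b (pmf (map_pmf U J) (U w)))"
  proof (rule E_mono)
    fix w assume w: "w \<in> set_pmf J"
    have "pmf (map_pmf V J) (V w) \<le> pmf (map_pmf U J) (U w)"
      by (rule pmf_map_mono[OF w]) (rule fn[OF w])
    then show "log b (pmf (map_pmf V J) (V w)) \<le> log b (pmf (map_pmf U J) (U w))"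
      using pmf_map_pos[OF w, of V] b by simp
  qed
  then show ?thesis by (simp add: Hp_map_expect[OF fin])
qed

lemma Hp_cong_fun:
  assumes fin: "finite (set_pmf J)" and b: "b > 1"
    and eq: "\<And>w w'. w \<in> set_pmf J \<Longrightarrow> w' \<in> set_pmf J \<Longrightarrow> V w' = V w \<longleftrightarrow> U w' = U w"
  shows "Hp b (map_pmf U J) = Hp b (map_pmf V J)"
proof (rule antisym)
  show "Hp b (map_pmf U J) \<le> Hp b (map_pmf V J)"
    by (rule Hp_mono_fun[OF fin b]) (use eq in blast)
  show "Hp b (map_pmf V J) \<le> Hp b (map_pmf U J)"
    by (rule Hp_mono_fun[OF fin b]) (use eq in blast)
qed

lemma Hp_map_le: "finite (set_pmf p) \<Longrightarrow> b > 1 \<Longrightarrow> Hp b (map_pmf g p) \<le> Hp b p"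
  using Hp_mono_fun[of p b "\<lambda>x. x" g] by simp

lemma Hp_map_inj: "finite (set_pmf p) \<Longrightarrow> b > 1 \<Longrightarrow> inj_on g (set_pmf p) \<Longrightarrow> Hp b (map_pmf g p) = Hp b p"
  using Hp_cong_fun[of p b "\<lambda>x. x" g] by (simp add: inj_on_eq_iff)

lemma Gibbs:
  fixes p q :: "'a \<Rightarrow> real"
  assumes S: "finite S" and pos: "\<And>t. t \<in> S \<Longrightarrow> 0 < p t" "\<And>t. t \<in> S \<Longrightarrow> 0 < q t"
    and sp: "sum p S = 1" and sq: "sum q S \<le> 1" and b: "b > 1"
  shows "0 \<le> (\<Sum>t\<in>S. p t * log b (p t / q t))"
proof -
  have lb: "0 < ln b" using b by simp
  have "(\<Sum>t\<in>S. (p t - q t) / ln b) \<le> (\<Sum>t\<in>S. p t * log b (p t / q t))"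
  proof (rule sum_mono)
    fix t assume t: "t \<in> S"
    have pt: "0 < p t" and qt: "0 < q t" using pos t by auto
    have "ln (q t / p t) \<le> q t / p t - 1" by (rule ln_le_minus_one) (use pt qt in simp)
    moreover have "ln (p t / q t) = - ln (q t / p t)" using pt qt by (simp add: ln_div)
    ultimately have "1 - q t / p t \<le> ln (p t / q t)" by simp
    then have "p t * (1 - q t / p t) \<le> p t * ln (p t / q t)" using pt by (simp add: mult_left_mono)
    then have "p t - q t \<le> p t * ln (p t / q t)" using pt by (simp add: algebra_simps)
    then show "(p t - q t) / ln b \<le> p t * log b (p t / q t)"
      using lb by (simp add: log_def divide_right_mono)
  qed
  moreover have "(\<Sum>t\<in>S. (p t - q t) / ln b) = (sum p S - sum q S) / ln b"
    by (simp add: sum_divide_distrib[symmetric] sum_subtractf)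
  moreover have "0 \<le> (sum p S - sum q S) / ln b" using sp sq lb by simp
  ultimately show ?thesis by linarith
qed

lemma Hp_le_card:
  assumes fin: "finite S" and sub: "set_pmf p \<subseteq> S" and b: "b > 1"
  shows "Hp b p \<le> log b (real (card S))"
proof -
  have fp: "finite (set_pmf p)" using finite_subset[OF sub fin] .
  have ne: "set_pmf p \<noteq> {}" by (rule set_pmf_not_empty)
  have cS: "card S > 0" using sub fin ne by (metis card_gt_0_iff subset_empty)
  have "0 \<le> (\<Sum>t\<in>set_pmf p. pmf p t * log b (pmf p t / (1 / real (card S))))"
  proof (rule Gibbs[OF fp _ _ _ _ b])
    show "sum (pmf p) (set_pmf p) = 1" by (rule sum_pmf_eq_1) (use fp in auto)
    have "card (set_pmf p) \<le> card S" by (rule card_mono[OF fin sub])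
    then show "(\<Sum>t\<in>set_pmf p. 1 / real (card S)) \<le> 1" using cS by (simp add: field_simps)
  qed (use cS in \<open>auto simp: pmf_positive\<close>)
  also have "\<dots> = (\<Sum>t\<in>set_pmf p. pmf p t * log b (pmf p t) + pmf p t * log b (real (card S)))"
    by (rule sum.cong) (use cS b in \<open>auto simp: log_mult pmf_positive distrib_left\<close>)
  also have "\<dots> = - Hp b p + log b (real (card S))"
    by (simp add: sum.distrib Hp_def E_def sum_distrib_right[symmetric] sum_pmf_eq_1 fp)
  finally show ?thesis by simp
qed

lemma marginal_snd:
  assumes fin: "finite (set_pmf p)"
  shows "(\<Sum>a\<in>{a. (a, c) \<in> set_pmf p}. pmf p (a, c)) = pmf (map_pmf snd p) c"
proof -
  have "pmf (map_pmf snd p) c = measure p (snd -` {c} \<inter> set_pmf p)"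
    by (simp add: pmf_map measure_Int_set_pmf)
  also have "\<dots> = sum (pmf p) (snd -` {c} \<inter> set_pmf p)"
    by (rule measure_measure_pmf_finite) (use fin in auto)
  also have "snd -` {c} \<inter> set_pmf p = (\<lambda>a. (a, c)) ` {a. (a, c) \<in> set_pmf p}" by auto
  also have "sum (pmf p) \<dots> = (\<Sum>a\<in>{a. (a, c) \<in> set_pmf p}. pmf p (a, c))"
    by (subst sum.reindex) (auto simp: inj_on_def)
  finally show ?thesis by simp
qed

lemma finite_slice: "finite S \<Longrightarrow> finite {a. (a, c) \<in> S}"
  by (rule finite_subset[of _ "fst ` S"]) force+


lemma cmi_eq:
  assumes fin: "finite (set_pmf J)"
  shows "cond_mutual_info b J A B C =
    Hp b (map_pmf (\<lambda>w. (A w, C w)) J) + Hp b (map_pmf (\<lambda>w. (B w, C w)) J)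
    - Hp b (map_pmf (\<lambda>w. (A w, B w, C w)) J) - Hp b (map_pmf C J)"
proof -
  define pABC where "pABC = map_pmf (\<lambda>w. (A w, B w, C w)) J"
  define pAC where "pAC = map_pmf (\<lambda>w. (A w, C w)) J"
  define pBC where "pBC = map_pmf (\<lambda>w. (B w, C w)) J"
  define pC where "pC = map_pmf C J"
  define F where "F = (\<lambda>(a, bb, c). log b ((pmf pABC (a, bb, c) * pmf pC c) / (pmf pAC (a, c) * pmf pBC (bb, c))))"
  have "cond_mutual_info b J A B C = E pABC F"
    unfolding cond_mutual_info_def Let_def E_def pABC_def[symmetric] pAC_def[symmetric]
      pBC_def[symmetric] pC_def[symmetric]
    by (rule sum.cong) (auto simp: F_def)
  also have "\<dots> = E J (\<lambda>w. F (A w, B w, C w))" unfolding pABC_def by (simp add: E_map fin)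
  also have "\<dots> = E J (\<lambda>w. log b (pmf pABC (A w, B w, C w)) + log b (pmf pC (C w))
       - log b (pmf pAC (A w, C w)) - log b (pmf pBC (B w, C w)))"
  proof (rule E_cong)
    fix w assume w: "w \<in> set_pmf J"
    have p1: "0 < pmf pABC (A w, B w, C w)" unfolding pABC_def
      using pmf_map_pos[OF w, of "\<lambda>w. (A w, B w, C w)"] by simp
    have p2: "0 < pmf pC (C w)" unfolding pC_def using pmf_map_pos[OF w, of C] by simp
    have p3: "0 < pmf pAC (A w, C w)" unfolding pAC_def
      using pmf_map_pos[OF w, of "\<lambda>w. (A w, C w)"] by simp
    have p4: "0 < pmf pBC (B w, C w)" unfolding pBC_def
      using pmf_map_pos[OF w, of "\<lambda>w. (B w, C w)"] by simp
    show "F (A w, B w, C w) = log b (pmf pABC (A w, B w, C w)) + log b (pmf pC (C w))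
       - log b (pmf pAC (A w, C w)) - log b (pmf pBC (B w, C w))"
      using p1 p2 p3 p4 by (simp add: F_def log_mult log_divide)
  qed
  also have "\<dots> = Hp b pAC + Hp b pBC - Hp b pABC - Hp b pC"
    unfolding pABC_def pAC_def pBC_def pC_def
    by (simp add: E_add E_diff Hp_map_expect[OF fin])
  finally show ?thesis unfolding pABC_def pAC_def pBC_def pC_def .
qed

lemma cmi_nonneg:
  assumes fin: "finite (set_pmf J)" and b: "b > 1"
  shows "0 \<le> cond_mutual_info b J A B C"
proof -
  define pABC where "pABC = map_pmf (\<lambda>w. (A w, B w, C w)) J"
  define pAC where "pAC = map_pmf (\<lambda>w. (A w, C w)) J"
  define pBC where "pBC = map_pmf (\<lambda>w. (B w, C w)) J"
  define pC where "pC = map_pmf C J"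
  define q where "q = (\<lambda>(a, bb, c). pmf pAC (a, c) * pmf pBC (bb, c) / pmf pC c)"
  define S where "S = set_pmf pABC"
  have fS: "finite S" unfolding S_def pABC_def using fin by simp
  have fAC: "finite (set_pmf pAC)" unfolding pAC_def using fin by simp
  have fBC: "finite (set_pmf pBC)" unfolding pBC_def using fin by simp
  have fC: "finite (set_pmf pC)" unfolding pC_def using fin by simp
  have mem: "(a, c) \<in> set_pmf pAC \<and> (bb, c) \<in> set_pmf pBC \<and> c \<in> set_pmf pC"
    if "(a, bb, c) \<in> S" for a bb c
    using that unfolding S_def pABC_def pAC_def pBC_def pC_def by auto
  have pos: "0 < pmf pABC t \<and> 0 < q t" if "t \<in> S" for t
  proof -
    obtain a bb c where t: "t = (a, bb, c)" by (cases t) auto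
    show ?thesis using mem[of a bb c] that unfolding t q_def S_def
      by (auto simp: pmf_positive)
  qed
  have mAC: "(\<Sum>a\<in>{a. (a, c) \<in> set_pmf pAC}. pmf pAC (a, c)) = pmf pC c" for c
    using marginal_snd[OF fAC, of c] unfolding pAC_def pC_def by (simp add: pmf.map_comp o_def)
  have mBC: "(\<Sum>a\<in>{a. (a, c) \<in> set_pmf pBC}. pmf pBC (a, c)) = pmf pC c" for c
    using marginal_snd[OF fBC, of c] unfolding pBC_def pC_def by (simp add: pmf.map_comp o_def)
  define Sig where "Sig = (SIGMA c:set_pmf pC. {a. (a, c) \<in> set_pmf pAC} \<times> {bb. (bb, c) \<in> set_pmf pBC})"
  define T where "T = (\<lambda>(c, a, bb). (a, bb, c)) ` Sig"
  have fSig: "finite Sig" unfolding Sig_def using fC fAC fBC by (auto intro!: finite_slice)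
  have ST: "S \<subseteq> T"
  proof
    fix t assume "t \<in> S"
    then obtain a bb c where t: "t = (a, bb, c)" and "(a, bb, c) \<in> S" by (cases t) auto
    then have "(c, a, bb) \<in> Sig" using mem unfolding Sig_def by auto
    then show "t \<in> T" unfolding T_def t by (rule image_eqI[rotated]) simp
  qed
  have "sum q S \<le> sum q T"
    by (rule sum_mono2[OF _ ST]) (auto simp: T_def fSig q_def)
  also have "sum q T = (\<Sum>(c, a, bb)\<in>Sig. pmf pAC (a, c) * pmf pBC (bb, c) / pmf pC c)"
    unfolding T_def by (subst sum.reindex) (auto simp: inj_on_def q_def intro!: sum.cong)
  also have "\<dots> = (\<Sum>c\<in>set_pmf pC. (\<Sum>a\<in>{a. (a, c) \<in> set_pmf pAC}. pmf pAC (a, c)) *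
        (\<Sum>bb\<in>{bb. (bb, c) \<in> set_pmf pBC}. pmf pBC (bb, c)) / pmf pC c)"
    unfolding Sig_def
    by (subst sum.Sigma[symmetric]) (auto simp: fC finite_slice fAC fBC sum_product sum_divide_distrib
        sum.cartesian_product case_prod_unfold)
  also have "\<dots> = (\<Sum>c\<in>set_pmf pC. pmf pC c)"
    by (rule sum.cong) (auto simp: mAC mBC pmf_positive)
  also have "\<dots> = 1" by (rule sum_pmf_eq_1) (auto simp: fC)
  finally have sq: "sum q S \<le> 1" .
  have sp: "sum (pmf pABC) S = 1" unfolding S_def by (rule sum_pmf_eq_1) (use fS S_def in auto)
  have "0 \<le> (\<Sum>t\<in>S. pmf pABC t * log b (pmf pABC t / q t))"
    by (rule Gibbs[OF fS _ _ sp sq b]) (use pos in auto)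
  also have "\<dots> = cond_mutual_info b J A B C"
    unfolding cond_mutual_info_def Let_def pABC_def[symmetric] pAC_def[symmetric]
      pBC_def[symmetric] pC_def[symmetric] S_def
    by (rule sum.cong) (auto simp: q_def field_simps)
  finally show ?thesis .
qed

lemma submod:
  assumes fin: "finite (set_pmf J)" and b: "b > 1"
  shows "Hp b (map_pmf (\<lambda>w. (A w, B w, C w)) J) + Hp b (map_pmf C J)
     \<le> Hp b (map_pmf (\<lambda>w. (A w, C w)) J) + Hp b (map_pmf (\<lambda>w. (B w, C w)) J)"
  using cmi_nonneg[OF fin b, of A B C] cmi_eq[OF fin, of b A B C] by simp

lemma subadd:
  assumes fin: "finite (set_pmf J)" and b: "b > 1"
  shows "Hp b (map_pmf (\<lambda>w. (A w, B w)) J) \<le> Hp b (map_pmf A J) + Hp b (map_pmf B J)"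
proof -
  have "Hp b (map_pmf (\<lambda>w. (A w, B w, ())) J) + Hp b (map_pmf (\<lambda>w. ()) J)
     \<le> Hp b (map_pmf (\<lambda>w. (A w, ())) J) + Hp b (map_pmf (\<lambda>w. (B w, ())) J)"
    by (rule submod[OF fin b])
  moreover have "Hp b (map_pmf (\<lambda>w. (A w, B w, ())) J) = Hp b (map_pmf (\<lambda>w. (A w, B w)) J)"
    by (rule Hp_cong_fun[OF fin b]) auto
  moreover have "Hp b (map_pmf (\<lambda>w. (A w, ())) J) = Hp b (map_pmf A J)"
    by (rule Hp_cong_fun[OF fin b]) auto
  moreover have "Hp b (map_pmf (\<lambda>w. (B w, ())) J) = Hp b (map_pmf B J)"
    by (rule Hp_cong_fun[OF fin b]) auto
  moreover have "Hp b (map_pmf (\<lambda>w. ()) J) = 0"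
    by (simp add: map_pmf_const Hp_def)
  ultimately show ?thesis by simp
qed

lemma pmf_joint: "pmf (bind_pmf Q (\<lambda>x. map_pmf (Pair x) (R x))) (x, y) = pmf Q x * pmf (R x) y"
proof -
  have "pmf (bind_pmf Q (\<lambda>x. map_pmf (Pair x) (R x))) (x, y)
      = (LINT x'|Q. indicator {x} x' * pmf (R x) y)"
    unfolding pmf_bind
  proof (rule Bochner_Integration.integral_cong[OF refl])
    fix x'
    show "pmf (map_pmf (Pair x') (R x')) (x, y) = indicator {x} x' * pmf (R x) y"
    proof (cases "x' = x")
      case True then show ?thesis using pmf_map_inj'[of "Pair x" "R x" y] by (simp add: inj_on_def)
    next
      case False then show ?thesis by (auto simp: pmf_eq_0_set_pmf)
    qed
  qed
  also have "\<dots> = pmf Q x * pmf (R x) y" by (simp add: measure_pmf_single)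
  finally show ?thesis .
qed

lemma Hp_chain:
  assumes fQ: "finite (set_pmf Q)" and fR: "\<And>x. x \<in> set_pmf Q \<Longrightarrow> finite (set_pmf (R x))"
    and b: "b > 1"
  shows "Hp b (bind_pmf Q (\<lambda>x. map_pmf (Pair x) (R x))) = Hp b Q + E Q (\<lambda>x. Hp b (R x))"
proof -
  define Z where "Z = bind_pmf Q (\<lambda>x. map_pmf (Pair x) (R x))"
  have fR': "finite (set_pmf (map_pmf (Pair x) (R x)))" if "x \<in> set_pmf Q" for x
    using fR[OF that] by simp
  have "Hp b Z = - E Z (\<lambda>w. log b (pmf Q (fst w)) + log b (pmf (R (fst w)) (snd w)))"
    unfolding Hp_def
  proof (rule arg_cong[where f=uminus], rule E_cong)
    fix w assume w: "w \<in> set_pmf Z"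
    obtain x y where wxy: "w = (x, y)" and x: "x \<in> set_pmf Q" and y: "y \<in> set_pmf (R x)"
      using w unfolding Z_def by auto
    show "log b (pmf Z w) = log b (pmf Q (fst w)) + log b (pmf (R (fst w)) (snd w))"
      using x y pmf_positive[OF x] pmf_positive[OF y] unfolding wxy Z_def pmf_joint by (simp add: log_mult)
  qed
  also have "\<dots> = - E Q (\<lambda>x. E (map_pmf (Pair x) (R x)) (\<lambda>w. log b (pmf Q (fst w)) + log b (pmf (R (fst w)) (snd w))))"
    unfolding Z_def by (simp add: E_bind[OF fQ fR'])
  also have "\<dots> = - E Q (\<lambda>x. log b (pmf Q x) - Hp b (R x))"
    by (rule arg_cong[where f=uminus], rule E_cong)
      (simp add: E_map fR E_add E_const Hp_def)
  also have "\<dots> = Hp b Q + E Q (\<lambda>x. Hp b (R x))"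
    by (simp add: E_diff E_add E_neg Hp_def)
  finally show ?thesis unfolding Z_def .
qed

lemma pair_as_bind: "pair_pmf p q = bind_pmf p (\<lambda>x. map_pmf (Pair x) q)"
  unfolding pair_pmf_def map_pmf_def by simp

lemma Hp_pair:
  assumes "finite (set_pmf p)" "finite (set_pmf q)" "b > 1"
  shows "Hp b (pair_pmf p q) = Hp b p + Hp b q"
  unfolding pair_as_bind using assms by (simp add: Hp_chain E_const)


definition hk :: "bool \<Rightarrow> 'a \<Rightarrow> 'a list \<Rightarrow> 'a list" where
  "hk k x ys = (if k then x # ys else ys)"

lemma del_cons: "del_chan d (x # xs) = bind_pmf (bernoulli_pmf (1 - d)) (\<lambda>k. map_pmf (hk k x) (del_chan d xs))"
  by (simp add: map_pmf_def hk_def)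

declare del_chan.simps(2)[simp del]

lemma hk_map: "map g (hk k x y) = hk k (g x) (map g y)" by (simp add: hk_def)
lemma hk_filter_T: "P x \<Longrightarrow> filter P (hk k x y) = hk k x (filter P y)" by (simp add: hk_def)
lemma hk_filter_F: "\<not> P x \<Longrightarrow> filter P (hk k x y) = filter P y" by (simp add: hk_def)
lemma hk_app: "hk k x a @ b = hk k x (a @ b)" by (simp add: hk_def)

lemma pair_bind_left: "pair_pmf (bind_pmf M f) N = bind_pmf M (\<lambda>k. pair_pmf (f k) N)"
  unfolding pair_pmf_def by (simp add: bind_assoc_pmf)

lemma pair_bind_right: "pair_pmf N (bind_pmf M f) = bind_pmf M (\<lambda>k. pair_pmf N (f k))"
  unfolding pair_pmf_def by (simp add: bind_assoc_pmf bind_commute_pmf[of N])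

lemma del_props:
  "finite (set_pmf (del_chan d xs)) \<and> (\<forall>y\<in>set_pmf (del_chan d xs). length y \<le> length xs \<and> set y \<subseteq> set xs)"
proof (induction xs)
  case Nil then show ?case by (simp only: del_chan.simps set_return_pmf) auto
next
  case (Cons x xs)
  have S: "set_pmf (del_chan d (x # xs)) \<subseteq> Cons x ` set_pmf (del_chan d xs) \<union> set_pmf (del_chan d xs)"
  proof
    fix z assume "z \<in> set_pmf (del_chan d (x # xs))"
    then obtain k y where "y \<in> set_pmf (del_chan d xs)" "z = hk k x y"
      unfolding del_cons set_bind_pmf set_map_pmf by blast
    then show "z \<in> Cons x ` set_pmf (del_chan d xs) \<union> set_pmf (del_chan d xs)"
      unfolding hk_def by (cases k) auto
  qed
  have "finite (set_pmf (del_chan d (x # xs)))"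
    by (rule finite_subset[OF S]) (use Cons.IH in simp)
  moreover have "\<forall>y\<in>set_pmf (del_chan d (x # xs)). length y \<le> length (x # xs) \<and> set y \<subseteq> set (x # xs)"
  proof
    fix y assume "y \<in> set_pmf (del_chan d (x # xs))"
    then have "y \<in> Cons x ` set_pmf (del_chan d xs) \<union> set_pmf (del_chan d xs)" using S by blast
    then show "length y \<le> length (x # xs) \<and> set y \<subseteq> set (x # xs)"
    proof
      assume "y \<in> Cons x ` set_pmf (del_chan d xs)"
      then obtain y' where y': "y = x # y'" "y' \<in> set_pmf (del_chan d xs)" by blast
      then have "length y' \<le> length xs \<and> set y' \<subseteq> set xs" using Cons.IH by blast
      then show ?thesis unfolding y' by auto
    next
      assume "y \<in> set_pmf (del_chan d xs)"
      then have "length y \<le> length xs \<and> set y \<subseteq> set xs" using Cons.IH by blast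
      then show ?thesis by auto
    qed
  qed
  ultimately show ?case by blast
qed

lemma del_finite: "finite (set_pmf (del_chan d xs))"
  by (rule conjunct1[OF del_props])

lemma del_length: "y \<in> set_pmf (del_chan d xs) \<Longrightarrow> length y \<le> length xs"
  using bspec[OF conjunct2[OF del_props[of d xs]]] by simp

lemma del_set: "y \<in> set_pmf (del_chan d xs) \<Longrightarrow> set y \<subseteq> set xs"
  using bspec[OF conjunct2[OF del_props[of d xs]]] by simp

lemma del_map: "map_pmf (map g) (del_chan d xs) = del_chan d (map g xs)"
proof (induction xs)
  case Nil then show ?case by simp
next
  case (Cons x xs)
  have "map_pmf (map g) (del_chan d (x # xs))
      = bind_pmf (bernoulli_pmf (1 - d)) (\<lambda>k. map_pmf (\<lambda>y. hk k (g x) (map g y)) (del_chan d xs))"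
    by (simp add: del_cons map_bind_pmf map_pmf_comp hk_map)
  also have "\<dots> = bind_pmf (bernoulli_pmf (1 - d)) (\<lambda>k. map_pmf (hk k (g x)) (map_pmf (map g) (del_chan d xs)))"
    by (simp add: map_pmf_comp)
  also have "\<dots> = del_chan d (map g (x # xs))" by (simp add: Cons del_cons)
  finally show ?case .
qed

lemma del_filter: "map_pmf (filter P) (del_chan d xs) = del_chan d (filter P xs)"
proof (induction xs)
  case Nil then show ?case by simp
next
  case (Cons x xs)
  show ?case
  proof (cases "P x")
    case True
    have "map_pmf (filter P) (del_chan d (x # xs))
      = bind_pmf (bernoulli_pmf (1 - d)) (\<lambda>k. map_pmf (\<lambda>y. hk k x (filter P y)) (del_chan d xs))"
      using True by (simp add: del_cons map_bind_pmf map_pmf_comp hk_filter_T)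
    also have "\<dots> = bind_pmf (bernoulli_pmf (1 - d)) (\<lambda>k. map_pmf (hk k x) (map_pmf (filter P) (del_chan d xs)))"
      by (simp add: map_pmf_comp)
    also have "\<dots> = del_chan d (filter P (x # xs))" using True by (simp add: Cons del_cons)
    finally show ?thesis .
  next
    case False
    have "map_pmf (filter P) (del_chan d (x # xs))
      = bind_pmf (bernoulli_pmf (1 - d)) (\<lambda>k. map_pmf (filter P) (del_chan d xs))"
      using False by (simp add: del_cons map_bind_pmf map_pmf_comp hk_filter_F)
    then show ?thesis using False by (simp add: Cons)
  qed
qed

lemma del_append:
  "del_chan d (xs @ ys) = map_pmf (\<lambda>(a, b). a @ b) (pair_pmf (del_chan d xs) (del_chan d ys))"
proof (induction xs)
  case Nil
  show ?case unfolding append.simps del_chan.simps(1) pair_return_pmf1 map_pmf_comp by simp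
next
  case (Cons x xs)
  have "del_chan d ((x # xs) @ ys)
     = bind_pmf (bernoulli_pmf (1 - d)) (\<lambda>k. map_pmf (hk k x) (map_pmf (\<lambda>(a, b). a @ b) (pair_pmf (del_chan d xs) (del_chan d ys))))"
    by (simp add: del_cons Cons)
  also have "\<dots> = bind_pmf (bernoulli_pmf (1 - d)) (\<lambda>k. map_pmf (\<lambda>(a, b). a @ b) (map_pmf (apfst (hk k x)) (pair_pmf (del_chan d xs) (del_chan d ys))))"
    by (simp add: map_pmf_comp case_prod_unfold hk_app)
  also have "\<dots> = map_pmf (\<lambda>(a, b). a @ b) (pair_pmf (del_chan d (x # xs)) (del_chan d ys))"
    by (simp add: del_cons pair_bind_left pair_map_pmf1 map_bind_pmf)
  finally show ?case .
qed

lemma del_split: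
  assumes disj: "\<And>s. \<not> (P1 s \<and> P2 s)"
  shows "map_pmf (\<lambda>y. (filter P1 y, filter P2 y)) (del_chan d xs)
       = pair_pmf (del_chan d (filter P1 xs)) (del_chan d (filter P2 xs))"
proof (induction xs)
  case Nil then show ?case by simp
next
  case (Cons x xs)
  let ?F = "\<lambda>y. (filter P1 y, filter P2 y)"
  show ?case
  proof (cases "P1 x")
    case True
    then have np: "\<not> P2 x" using disj by blast
    have "map_pmf ?F (del_chan d (x # xs)) = bind_pmf (bernoulli_pmf (1 - d)) (\<lambda>k. map_pmf (\<lambda>y. apfst (hk k x) (?F y)) (del_chan d xs))"
      using True np by (simp add: del_cons map_bind_pmf map_pmf_comp hk_filter_T hk_filter_F)
    also have "\<dots> = bind_pmf (bernoulli_pmf (1 - d)) (\<lambda>k. map_pmf (apfst (hk k x)) (map_pmf ?F (del_chan d xs)))"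
      by (simp only: map_pmf_comp)
    also have "\<dots> = pair_pmf (del_chan d (filter P1 (x # xs))) (del_chan d (filter P2 (x # xs)))"
      using True np by (simp add: Cons del_cons pair_bind_left pair_map_pmf1)
    finally show ?thesis .
  next
    case False
    show ?thesis
    proof (cases "P2 x")
      case True
      have "map_pmf ?F (del_chan d (x # xs)) = bind_pmf (bernoulli_pmf (1 - d)) (\<lambda>k. map_pmf (\<lambda>y. apsnd (hk k x) (?F y)) (del_chan d xs))"
        using True False by (simp add: del_cons map_bind_pmf map_pmf_comp hk_filter_T hk_filter_F)
      also have "\<dots> = bind_pmf (bernoulli_pmf (1 - d)) (\<lambda>k. map_pmf (apsnd (hk k x)) (map_pmf ?F (del_chan d xs)))"
        by (simp only: map_pmf_comp)
      also have "\<dots> = pair_pmf (del_chan d (filter P1 (x # xs))) (del_chan d (filter P2 (x # xs)))"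
        using True False by (simp add: Cons del_cons pair_bind_right pair_map_pmf2)
      finally show ?thesis .
    next
      case False2: False
      have "map_pmf ?F (del_chan d (x # xs)) = bind_pmf (bernoulli_pmf (1 - d)) (\<lambda>k. map_pmf ?F (del_chan d xs))"
        using False2 False by (simp add: del_cons map_bind_pmf map_pmf_comp hk_filter_F)
      then show ?thesis using False2 False by (simp add: Cons)
    qed
  qed
qed


lemma fekete:
  fixes a :: "nat \<Rightarrow> real"
  assumes sub: "\<And>m n. a (m + n) \<le> a m + a n" and nn: "\<And>n. 0 \<le> a n"
  shows "(\<lambda>n. a n / real n) \<longlonglongrightarrow> (INF n\<in>{1..}. a n / real n)"
proof -
  define L where "L = (INF n\<in>{1..}. a n / real n)"
  have bdd: "bdd_below ((\<lambda>n. a n / real n) ` {1..})"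
    by (rule bdd_belowI[of _ 0]) (use nn in auto)
  have Lle: "L \<le> a n / real n" if "n \<ge> 1" for n
    unfolding L_def by (rule cINF_lower[OF bdd]) (use that in auto)
  have iter: "a (q * m + r) \<le> real q * a m + a r" for q m r
  proof (induction q)
    case 0 then show ?case by simp
  next
    case (Suc q)
    have "a (Suc q * m + r) = a (m + (q * m + r))" by (simp add: algebra_simps)
    also have "\<dots> \<le> a m + a (q * m + r)" by (rule sub)
    also have "\<dots> \<le> a m + (real q * a m + a r)" using Suc by simp
    finally show ?case by (simp add: algebra_simps)
  qed
  show ?thesis unfolding L_def[symmetric]
  proof (rule LIMSEQ_I)
    fix e :: real assume e: "0 < e"
    have "L < L + e / 2" using e by simp
    then obtain m where m: "m \<in> {1..}" and am: "a m / real m < L + e / 2"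
      using cINF_less_iff[OF _ bdd, of "L + e / 2"] unfolding L_def[symmetric] by auto
    have m1: "m \<ge> 1" using m by simp
    define M where "M = (\<Sum>r<m. a r)"
    have M0: "0 \<le> M" unfolding M_def by (rule sum_nonneg) (use nn in auto)
    have aM: "a r \<le> M" if "r < m" for r
      unfolding M_def by (rule member_le_sum) (use that nn in auto)
    define N where "N = nat \<lceil>2 * M / e\<rceil> + 1"
    show "\<exists>no. \<forall>n\<ge>no. norm (a n / real n - L) < e"
    proof (intro exI allI impI)
      fix n assume nN: "N \<le> n"
      have n1: "n \<ge> 1" using nN unfolding N_def by simp
      have npos: "0 < real n" using n1 by simp
      have "2 * M / e < real N" unfolding N_def by linarith
      also have "\<dots> \<le> real n" using nN by simp
      finally have "2 * M / e < real n" .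
      then have Mn: "M / real n < e / 2" using e npos by (simp add: field_simps)
      have "a n = a ((n div m) * m + n mod m)" by simp
      also have "\<dots> \<le> real (n div m) * a m + a (n mod m)" by (rule iter)
      also have "\<dots> \<le> real (n div m) * a m + M" using aM[of "n mod m"] m1 by simp
      finally have an: "a n \<le> real (n div m) * a m + M" .
      have "n div m * m \<le> n" using div_mult_mod_eq[of n m] by linarith
      then have "real (n div m) * real m \<le> real n"
        by (metis of_nat_le_iff of_nat_mult)
      then have h2: "a m * (real (n div m) * real m) \<le> a m * real n"
        by (rule mult_left_mono[OF _ nn])
      have "real (n div m) * a m / real n \<le> a m / real m"
        using m1 npos h2 by (simp add: field_simps mult_ac)
      then have "a n / real n \<le> a m / real m + M / real n"
        using an npos by (simp add: field_simps)
      then have "a n / real n < L + e" using am Mn by linarith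
      moreover have "L \<le> a n / real n" by (rule Lle[OF n1])
      ultimately show "norm (a n / real n - L) < e" by simp
    qed
  qed
qed


definition mic :: "real \<Rightarrow> real \<Rightarrow> 'a list pmf \<Rightarrow> real" where
  "mic b d Q = Hp b (bind_pmf Q (del_chan d)) - E Q (\<lambda>x. Hp b (del_chan d x))"

lemma joint_map:
  "map_pmf (\<lambda>w. (fst w, g (snd w))) (bind_pmf Q (\<lambda>x. map_pmf (Pair x) (R x)))
   = bind_pmf Q (\<lambda>x. map_pmf (Pair x) (map_pmf g (R x)))"
  by (simp add: map_bind_pmf map_pmf_comp)

lemma joint_map_snd:
  "map_pmf (\<lambda>w. g (snd w)) (bind_pmf Q (\<lambda>x. map_pmf (Pair x) (R x)))
   = bind_pmf Q (\<lambda>x. map_pmf g (R x))"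
  by (simp add: map_bind_pmf map_pmf_comp)

lemma joint_map_fst:
  "map_pmf fst (bind_pmf Q (\<lambda>x. map_pmf (Pair x) (R x))) = Q"
  by (simp add: map_bind_pmf map_pmf_comp bind_return_pmf')

lemma chan_joint_eq: "chan_joint d Q = bind_pmf Q (\<lambda>x. map_pmf (Pair x) (del_chan d x))"
  unfolding chan_joint_def by simp

lemma finite_joint:
  "finite (set_pmf Q) \<Longrightarrow> (\<And>x. x \<in> set_pmf Q \<Longrightarrow> finite (set_pmf (R x))) \<Longrightarrow>
   finite (set_pmf (bind_pmf Q (\<lambda>x. map_pmf (Pair x) (R x))))"
  by (rule finite_set_bind) auto

lemma MI_mic:
  assumes fQ: "finite (set_pmf Q)" and b: "b > 1"
  shows "mutual_info b (chan_joint d Q) fst snd = mic b d Q"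
proof -
  define J where "J = chan_joint d Q"
  have fJ: "finite (set_pmf J)" unfolding J_def chan_joint_eq
    by (rule finite_joint[OF fQ]) (rule del_finite)
  have "mutual_info b J fst snd = Hp b (map_pmf (\<lambda>w. (fst w, ())) J) + Hp b (map_pmf (\<lambda>w. (snd w, ())) J)
    - Hp b (map_pmf (\<lambda>w. (fst w, snd w, ())) J) - Hp b (map_pmf (\<lambda>w. ()) J)"
    unfolding mutual_info_def by (rule cmi_eq[OF fJ])
  also have "Hp b (map_pmf (\<lambda>w. (fst w, ())) J) = Hp b (map_pmf fst J)"
    by (rule Hp_cong_fun[OF fJ b]) auto
  also have "map_pmf fst J = Q" unfolding J_def chan_joint_eq by (rule joint_map_fst)
  also have "Hp b (map_pmf (\<lambda>w. (snd w, ())) J) = Hp b (map_pmf snd J)"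
    by (rule Hp_cong_fun[OF fJ b]) auto
  also have "map_pmf snd J = bind_pmf Q (del_chan d)"
    unfolding J_def chan_joint_eq using joint_map_snd[of "\<lambda>y. y" Q "del_chan d"] by simp
  also have "Hp b (map_pmf (\<lambda>w. (fst w, snd w, ())) J) = Hp b (map_pmf (\<lambda>w. w) J)"
    by (rule Hp_cong_fun[OF fJ b]) auto
  also have "Hp b (map_pmf (\<lambda>w. w) J) = Hp b Q + E Q (\<lambda>x. Hp b (del_chan d x))"
    unfolding J_def chan_joint_eq by (simp add: Hp_chain[OF fQ del_finite b])
  also have "Hp b (map_pmf (\<lambda>w. ()) J) = 0" by (simp add: Hp_def)
  finally show ?thesis unfolding J_def mic_def by simp
qed

lemma mic_nonneg: "finite (set_pmf Q) \<Longrightarrow> b > 1 \<Longrightarrow> 0 \<le> mic b d Q"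
  using MI_mic[of Q b d] cmi_nonneg[of "chan_joint d Q" b fst snd "\<lambda>_. ()"]
  unfolding mutual_info_def chan_joint_eq
  by (simp add: finite_joint del_finite)

lemma mic_le_Hp:
  assumes fQ: "finite (set_pmf Q)" and b: "b > 1"
  shows "mic b d Q \<le> Hp b Q"
proof -
  define J where "J = bind_pmf Q (\<lambda>x. map_pmf (Pair x) (del_chan d x))"
  have fJ: "finite (set_pmf J)" unfolding J_def by (rule finite_joint[OF fQ]) (rule del_finite)
  have "Hp b (bind_pmf Q (del_chan d)) = Hp b (map_pmf snd J)"
    unfolding J_def using joint_map_snd[of "\<lambda>y. y" Q "del_chan d"] by simp
  also have "\<dots> \<le> Hp b J" by (rule Hp_map_le[OF fJ b])
  also have "\<dots> = Hp b Q + E Q (\<lambda>x. Hp b (del_chan d x))"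
    unfolding J_def by (rule Hp_chain[OF fQ del_finite b])
  finally show ?thesis unfolding mic_def by simp
qed


lemma del_take_drop: "del_chan d x = map_pmf (\<lambda>(a, b). a @ b) (pair_pmf (del_chan d (take m x)) (del_chan d (drop m x)))"
  using del_append[of d "take m x" "drop m x"] by simp

lemma mic_split:
  fixes Q :: "'a list pmf"
  assumes fQ: "finite (set_pmf Q)" and b: "b > 1"
  shows "mic b d Q \<le> mic b d (map_pmf (take m) Q) + mic b d (map_pmf (drop m) Q)"
proof -
  define R :: "'a list \<Rightarrow> ('a list \<times> 'a list) pmf" where "R = (\<lambda>x. pair_pmf (del_chan d (take m x)) (del_chan d (drop m x)))"
  define app :: "'a list \<times> 'a list \<Rightarrow> 'a list" where "app = (\<lambda>(a, b). a @ b)"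
  have delR: "del_chan d x = map_pmf app (R x)" for x
    unfolding R_def app_def by (rule del_take_drop)
  have fR: "finite (set_pmf (R x))" for x unfolding R_def by (simp add: del_finite)
  define J where "J = bind_pmf Q (\<lambda>x. map_pmf (Pair x) (R x))"
  have fJ: "finite (set_pmf J)" unfolding J_def by (rule finite_joint[OF fQ fR])
  have sm: "Hp b (map_pmf (\<lambda>w. (fst w, snd w, app (snd w))) J) + Hp b (map_pmf (\<lambda>w. app (snd w)) J)
     \<le> Hp b (map_pmf (\<lambda>w. (fst w, app (snd w))) J) + Hp b (map_pmf (\<lambda>w. (snd w, app (snd w))) J)"
    by (rule submod[OF fJ b])
  have T1: "Hp b (map_pmf (\<lambda>w. (fst w, snd w, app (snd w))) J)
      = Hp b Q + (E Q (\<lambda>x. Hp b (del_chan d (take m x))) + E Q (\<lambda>x. Hp b (del_chan d (drop m x))))"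
  proof -
    have "Hp b (map_pmf (\<lambda>w. (fst w, snd w, app (snd w))) J) = Hp b (map_pmf (\<lambda>w. w) J)"
      by (rule Hp_cong_fun[OF fJ b]) auto
    also have "\<dots> = Hp b Q + E Q (\<lambda>x. Hp b (R x))"
      unfolding J_def by (simp add: Hp_chain[OF fQ fR b])
    also have "E Q (\<lambda>x. Hp b (R x)) = E Q (\<lambda>x. Hp b (del_chan d (take m x)) + Hp b (del_chan d (drop m x)))"
      unfolding R_def by (simp add: Hp_pair del_finite b)
    finally show ?thesis by (simp add: E_add)
  qed
  have T2: "map_pmf (\<lambda>w. app (snd w)) J = bind_pmf Q (del_chan d)"
    unfolding J_def joint_map_snd delR ..
  have T3: "Hp b (map_pmf (\<lambda>w. (fst w, app (snd w))) J) = Hp b Q + E Q (\<lambda>x. Hp b (del_chan d x))"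
  proof -
    have "map_pmf (\<lambda>w. (fst w, app (snd w))) J = bind_pmf Q (\<lambda>x. map_pmf (Pair x) (del_chan d x))"
      unfolding J_def joint_map delR ..
    then show ?thesis by (simp add: Hp_chain[OF fQ del_finite b])
  qed
  have T4: "Hp b (map_pmf (\<lambda>w. (snd w, app (snd w))) J)
     \<le> Hp b (bind_pmf (map_pmf (take m) Q) (del_chan d)) + Hp b (bind_pmf (map_pmf (drop m) Q) (del_chan d))"
  proof -
    define J' where "J' = bind_pmf Q R"
    have fJ': "finite (set_pmf J')" unfolding J'_def by (rule finite_set_bind[OF fQ fR])
    have "Hp b (map_pmf (\<lambda>w. (snd w, app (snd w))) J) = Hp b (map_pmf snd J)"
      by (rule Hp_cong_fun[OF fJ b]) auto
    also have "map_pmf snd J = J'"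
      unfolding J_def J'_def using joint_map_snd[of "\<lambda>y. y" Q R] by simp
    also have "Hp b J' = Hp b (map_pmf (\<lambda>w. (fst w, snd w)) J')" by simp
    also have "\<dots> \<le> Hp b (map_pmf fst J') + Hp b (map_pmf snd J')"
      by (rule subadd[OF fJ' b])
    also have "map_pmf fst J' = bind_pmf (map_pmf (take m) Q) (del_chan d)"
      unfolding J'_def R_def by (simp add: map_bind_pmf bind_map_pmf map_fst_pair_pmf)
    also have "map_pmf snd J' = bind_pmf (map_pmf (drop m) Q) (del_chan d)"
      unfolding J'_def R_def by (simp add: map_bind_pmf bind_map_pmf map_snd_pair_pmf)
    finally show ?thesis .
  qed
  have "mic b d Q = Hp b (map_pmf (\<lambda>w. app (snd w)) J) - Hp b (map_pmf (\<lambda>w. (fst w, app (snd w))) J) + Hp b Q"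
    unfolding mic_def T2 T3 by simp
  also have "\<dots> \<le> Hp b (map_pmf (\<lambda>w. (snd w, app (snd w))) J) - Hp b (map_pmf (\<lambda>w. (fst w, snd w, app (snd w))) J) + Hp b Q"
    using sm by simp
  also have "\<dots> \<le> mic b d (map_pmf (take m) Q) + mic b d (map_pmf (drop m) Q)"
    using T4 unfolding T1 mic_def by (simp add: E_map fQ)
  finally show ?thesis .
qed

lemma bind_pair_pair:
  "bind_pmf (pair_pmf Q R) (\<lambda>(a, b). pair_pmf (F a) (G b)) = pair_pmf (bind_pmf Q F) (bind_pmf R G)"
  unfolding pair_pmf_def bind_assoc_pmf bind_return_pmf
  by (rule bind_pmf_cong[OF refl], simp, rule bind_commute_pmf)

lemma mic_concat:
  fixes Q R :: "'a list pmf"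
  assumes fQ: "finite (set_pmf Q)" and fR: "finite (set_pmf R)" and b: "b > 1"
    and len: "\<And>x. x \<in> set_pmf Q \<Longrightarrow> length x \<le> n"
  shows "mic b d Q + mic b d R - log b (real n + 1) \<le> mic b d (map_pmf (\<lambda>(a, b). a @ b) (pair_pmf Q R))"
proof -
  define app :: "'a list \<times> 'a list \<Rightarrow> 'a list" where "app = (\<lambda>(a, b). a @ b)"
  define T where "T = map_pmf app (pair_pmf Q R)"
  define Y1 where "Y1 = bind_pmf Q (del_chan d)"
  define Y2 where "Y2 = bind_pmf R (del_chan d)"
  define Y where "Y = pair_pmf Y1 Y2"
  have fY1: "finite (set_pmf Y1)" unfolding Y1_def by (rule finite_set_bind[OF fQ del_finite])
  have fY2: "finite (set_pmf Y2)" unfolding Y2_def by (rule finite_set_bind[OF fR del_finite])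
  have fY: "finite (set_pmf Y)" unfolding Y_def using fY1 fY2 by simp
  have fPQR: "finite (set_pmf (pair_pmf Q R))" using fQ fR by simp
  have bT: "bind_pmf T (del_chan d) = map_pmf app Y"
  proof -
    have "bind_pmf T (del_chan d) = bind_pmf (pair_pmf Q R) (\<lambda>w. map_pmf app (pair_pmf (del_chan d (fst w)) (del_chan d (snd w))))"
      unfolding T_def bind_map_pmf app_def
      by (rule bind_pmf_cong[OF refl]) (auto simp: del_append)
    also have "\<dots> = map_pmf app (bind_pmf (pair_pmf Q R) (\<lambda>(a, b). pair_pmf (del_chan d a) (del_chan d b)))"
      by (simp add: map_bind_pmf case_prod_unfold)
    also have "\<dots> = map_pmf app Y" unfolding Y_def Y1_def Y2_def bind_pair_pair ..
    finally show ?thesis .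
  qed
  have inj: "inj_on (\<lambda>w. (app w, length (fst w))) (set_pmf Y)"
    by (rule inj_onI) (auto simp: app_def append_eq_append_conv)
  have "Hp b Y1 + Hp b Y2 = Hp b Y" unfolding Y_def by (simp add: Hp_pair fY1 fY2 b)
  also have "\<dots> = Hp b (map_pmf (\<lambda>w. (app w, length (fst w))) Y)"
    by (rule Hp_map_inj[OF fY b inj, symmetric])
  also have "\<dots> \<le> Hp b (map_pmf app Y) + Hp b (map_pmf (\<lambda>w. length (fst w)) Y)"
    by (rule subadd[OF fY b])
  also have "Hp b (map_pmf (\<lambda>w. length (fst w)) Y) \<le> log b (real (card {0..n}))"
  proof (rule Hp_le_card[OF _ _ b])
    show "set_pmf (map_pmf (\<lambda>w. length (fst w)) Y) \<subseteq> {0..n}"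
    proof
      fix l assume "l \<in> set_pmf (map_pmf (\<lambda>w. length (fst w)) Y)"
      then obtain y1 where "y1 \<in> set_pmf Y1" "l = length y1" unfolding Y_def by auto
      then obtain x where x: "x \<in> set_pmf Q" "y1 \<in> set_pmf (del_chan d x)" "l = length y1"
        unfolding Y1_def by auto
      then have "l \<le> length x" using del_length by simp
      then show "l \<in> {0..n}" using len[OF x(1)] by simp
    qed
  qed simp
  finally have H1: "Hp b Y1 + Hp b Y2 \<le> Hp b (bind_pmf T (del_chan d)) + log b (real n + 1)"
    unfolding bT by (simp add: add.commute)
  have "E T (\<lambda>x. Hp b (del_chan d x)) = E (pair_pmf Q R) (\<lambda>w. Hp b (del_chan d (app w)))"
    unfolding T_def by (rule E_map[OF fPQR])
  also have "\<dots> \<le> E (pair_pmf Q R) (\<lambda>w. Hp b (del_chan d (fst w)) + Hp b (del_chan d (snd w)))"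
  proof (rule E_mono)
    fix w :: "'a list \<times> 'a list"
    have "Hp b (del_chan d (app w)) = Hp b (map_pmf app (pair_pmf (del_chan d (fst w)) (del_chan d (snd w))))"
      by (simp add: app_def case_prod_unfold del_append)
    also have "\<dots> \<le> Hp b (pair_pmf (del_chan d (fst w)) (del_chan d (snd w)))"
      by (rule Hp_map_le[OF _ b]) (simp add: del_finite)
    also have "\<dots> = Hp b (del_chan d (fst w)) + Hp b (del_chan d (snd w))"
      by (simp add: Hp_pair del_finite b)
    finally show "Hp b (del_chan d (app w)) \<le> Hp b (del_chan d (fst w)) + Hp b (del_chan d (snd w))" .
  qed
  also have "\<dots> = E Q (\<lambda>x. Hp b (del_chan d x)) + E R (\<lambda>x. Hp b (del_chan d x))"
  proof -
    have "E (map_pmf fst (pair_pmf Q R)) (\<lambda>x. Hp b (del_chan d x)) = E (pair_pmf Q R) (\<lambda>w. Hp b (del_chan d (fst w)))"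
      by (rule E_map[OF fPQR])
    moreover have "E (map_pmf snd (pair_pmf Q R)) (\<lambda>x. Hp b (del_chan d x)) = E (pair_pmf Q R) (\<lambda>w. Hp b (del_chan d (snd w)))"
      by (rule E_map[OF fPQR])
    ultimately show ?thesis by (simp add: E_add map_fst_pair_pmf map_snd_pair_pmf)
  qed
  finally have H2: "E T (\<lambda>x. Hp b (del_chan d x)) \<le> E Q (\<lambda>x. Hp b (del_chan d x)) + E R (\<lambda>x. Hp b (del_chan d x))" .
  show ?thesis using H1 H2 unfolding mic_def T_def[symmetric] app_def[symmetric] Y1_def Y2_def by linarith
qed


definition Sn :: "nat \<Rightarrow> bool list pmf set" where
  "Sn n = {P. set_pmf P \<subseteq> {xs. length xs = n}}"

lemma fin_Sn: "P \<in> Sn n \<Longrightarrow> finite (set_pmf P)"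
  unfolding Sn_def by (rule finite_subset[OF _ finite_list_length]) auto

lemma Sn_ne: "return_pmf (replicate n False) \<in> Sn n"
  unfolding Sn_def by simp

lemma bdi_eq: "b > 1 \<Longrightarrow> bin_del_max_info b d n = (SUP P\<in>Sn n. mic b d P)"
  unfolding bin_del_max_info_def Sn_def[symmetric]
  by (rule SUP_cong[OF refl]) (simp add: MI_mic fin_Sn)

lemma bdd_Sn: assumes b: "b > 1" shows "bdd_above (mic b d ` Sn n)"
proof (rule bdd_aboveI2)
  fix P assume P: "P \<in> Sn n"
  have "mic b d P \<le> Hp b P" by (rule mic_le_Hp[OF fin_Sn[OF P] b])
  also have "\<dots> \<le> log b (real (card {xs :: bool list. length xs = n}))"
    by (rule Hp_le_card[OF finite_list_length _ b]) (use P in \<open>auto simp: Sn_def\<close>)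
  finally show "mic b d P \<le> log b (real (card {xs :: bool list. length xs = n}))" .
qed

lemma a_upper: "b > 1 \<Longrightarrow> P \<in> Sn n \<Longrightarrow> mic b d P \<le> bin_del_max_info b d n"
  unfolding bdi_eq by (rule cSUP_upper[OF _ bdd_Sn])

lemma a_least: "b > 1 \<Longrightarrow> (\<And>P. P \<in> Sn n \<Longrightarrow> mic b d P \<le> c) \<Longrightarrow> bin_del_max_info b d n \<le> c"
  unfolding bdi_eq by (rule cSUP_least) (use Sn_ne in auto)

lemma a_nonneg: "b > 1 \<Longrightarrow> 0 \<le> bin_del_max_info b d n"
  using a_upper[OF _ Sn_ne, of b d n] mic_nonneg[of "return_pmf (replicate n False)" b d] by simp

lemma a_sub: assumes b: "b > 1"
  shows "bin_del_max_info b d (m + n) \<le> bin_del_max_info b d m + bin_del_max_info b d n"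
proof (rule a_least[OF b])
  fix P assume P: "P \<in> Sn (m + n)"
  have "map_pmf (take m) P \<in> Sn m" "map_pmf (drop m) P \<in> Sn n" using P by (auto simp: Sn_def)
  then show "mic b d P \<le> bin_del_max_info b d m + bin_del_max_info b d n"
    using mic_split[OF fin_Sn[OF P] b, of d m] a_upper[OF b, of "map_pmf (take m) P" m d]
      a_upper[OF b, of "map_pmf (drop m) P" n d] by linarith
qed

fun iidc :: "nat \<Rightarrow> bool list pmf \<Rightarrow> bool list pmf" where
  "iidc 0 Q = return_pmf []"
| "iidc (Suc m) Q = map_pmf (\<lambda>(a, b). a @ b) (pair_pmf Q (iidc m Q))"

lemma iidc_Sn: "Q \<in> Sn n \<Longrightarrow> iidc m Q \<in> Sn (m * n)"
proof (induction m)
  case 0 then show ?case by (simp add: Sn_def)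
next
  case (Suc m)
  from Suc have h1: "\<And>x. x \<in> set_pmf (iidc m Q) \<Longrightarrow> length x = m * n"
    and h2: "\<And>x. x \<in> set_pmf Q \<Longrightarrow> length x = n" by (auto simp: Sn_def)
  show ?case unfolding Sn_def by (auto simp: h1 h2)
qed

lemma mic_return_nil: "mic b d (return_pmf []) = 0"
  by (simp add: mic_def bind_return_pmf)

lemma iidc_mic:
  assumes Q: "Q \<in> Sn n" and b: "b > 1"
  shows "real m * (mic b d Q - log b (real n + 1)) \<le> mic b d (iidc m Q)"
proof (induction m)
  case 0 then show ?case by (simp add: mic_return_nil)
next
  case (Suc m)
  have "mic b d Q + mic b d (iidc m Q) - log b (real n + 1) \<le> mic b d (iidc (Suc m) Q)"
    unfolding iidc.simps
    by (rule mic_concat[OF fin_Sn[OF Q] fin_Sn[OF iidc_Sn[OF Q]] b]) (use Q in \<open>auto simp: Sn_def\<close>)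
  then show ?case using Suc by (simp add: algebra_simps)
qed

lemma C2_lim: assumes b: "b > 1"
  shows "(\<lambda>n. bin_del_max_info b d n / real n) \<longlonglongrightarrow> C2 b d"
proof -
  have "(\<lambda>n. bin_del_max_info b d n / real n) \<longlonglongrightarrow> (INF n\<in>{1..}. bin_del_max_info b d n / real n)"
    by (rule fekete) (use a_sub[OF b] a_nonneg[OF b] in auto)
  then show ?thesis unfolding C2_def using limI by (metis)
qed

lemma cap_bound:
  assumes b: "b > 1" and Q: "Q \<in> Sn n"
  shows "mic b d Q \<le> real n * C2 b d + log b (real n + 1)"
proof (cases "n = 0")
  case True
  then have "set_pmf Q \<subseteq> {[]}" using Q by (auto simp: Sn_def)
  then have "Q = return_pmf []" by (simp add: set_pmf_subset_singleton)
  then show ?thesis using True by (simp add: mic_return_nil)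
next
  case False
  then have n1: "n \<ge> 1" by simp
  define c where "c = mic b d Q - log b (real n + 1)"
  define f where "f = (\<lambda>m. Suc m * n)"
  have sm: "strict_mono f" unfolding f_def by (rule strict_monoI) (use n1 in simp)
  have lim: "((\<lambda>j. bin_del_max_info b d j / real j) \<circ> f) \<longlonglongrightarrow> C2 b d"
    by (rule LIMSEQ_subseq_LIMSEQ[OF C2_lim[OF b] sm])
  have "c / real n \<le> C2 b d"
  proof (rule LIMSEQ_le_const[OF lim], intro exI allI impI)
    fix m :: nat
    have "real (Suc m) * c \<le> mic b d (iidc (Suc m) Q)" unfolding c_def by (rule iidc_mic[OF Q b])
    also have "\<dots> \<le> bin_del_max_info b d (Suc m * n)" by (rule a_upper[OF b iidc_Sn[OF Q]])
    finally have h: "real (Suc m) * c \<le> bin_del_max_info b d (Suc m * n)" .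
    have pos: "0 < real (Suc m) * real n" using n1 by simp
    have "c / real n = (real (Suc m) * c) / (real (Suc m) * real n)" by simp
    also have "\<dots> \<le> bin_del_max_info b d (Suc m * n) / (real (Suc m) * real n)"
      by (rule divide_right_mono[OF h]) (use pos in simp)
    also have eqd: "real (Suc m) * real n = real (Suc m * n)" by (simp only: of_nat_mult)
    finally show "c / real n \<le> ((\<lambda>j. bin_del_max_info b d j / real j) \<circ> f) m"
      unfolding f_def o_def .
  qed
  then have "c \<le> real n * C2 b d" using n1 by (simp add: field_simps)
  then show ?thesis unfolding c_def by simp
qed


lemma mic_cond:
  fixes Q :: "'a list pmf" and f :: "'a list \<Rightarrow> 'c"
  assumes fQ: "finite (set_pmf Q)" and b: "b > 1"
  shows "mic b d Q \<le> Hp b (map_pmf f Q) + E (map_pmf f Q) (\<lambda>n. mic b d (cond_pmf Q {z. f z = n}))"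
proof -
  define pN where "pN = map_pmf f Q"
  define Qn where "Qn = (\<lambda>n. cond_pmf Q {z. f z = n})"
  have fN: "finite (set_pmf pN)" unfolding pN_def using fQ by simp
  have ne: "set_pmf Q \<inter> {z. f z = n} \<noteq> {}" if "n \<in> set_pmf pN" for n
    using that unfolding pN_def by auto
  have setQn: "set_pmf (Qn n) = set_pmf Q \<inter> {z. f z = n}" if "n \<in> set_pmf pN" for n
    unfolding Qn_def by (rule set_cond_pmf[OF ne[OF that]])
  have fQn: "finite (set_pmf (Qn n))" if "n \<in> set_pmf pN" for n
    using setQn[OF that] fQ by simp
  have Qeq: "bind_pmf pN Qn = Q"
    unfolding Qn_def
  proof (rule bind_cond_pmf_cancel)
    fix n assume "n \<in> set_pmf pN" then show "set_pmf Q \<inter> {z. f z = n} \<noteq> {}" by (rule ne)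
  next
    fix z assume "z \<in> set_pmf Q" then show "set_pmf pN \<inter> {n. f z = n} \<noteq> {}" unfolding pN_def by auto
  next
    fix n z assume "n \<in> set_pmf pN" "z \<in> set_pmf Q" "f z = n"
    then show "measure_pmf.prob Q {z. f z = n} = measure_pmf.prob pN {n'. f z = n'}"
      unfolding pN_def by (simp add: measure_pmf_single[symmetric] pmf_map vimage_def)
  qed
  have fB: "finite (set_pmf (bind_pmf (Qn n) (del_chan d)))" if "n \<in> set_pmf pN" for n
    by (rule finite_set_bind[OF fQn[OF that] del_finite])
  have "Hp b (bind_pmf Q (del_chan d)) = Hp b (bind_pmf pN (\<lambda>n. bind_pmf (Qn n) (del_chan d)))"
    unfolding Qeq[symmetric] bind_assoc_pmf ..
  also have "\<dots> = Hp b (map_pmf snd (bind_pmf pN (\<lambda>n. map_pmf (Pair n) (bind_pmf (Qn n) (del_chan d)))))"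
    using joint_map_snd[of "\<lambda>y. y" pN "\<lambda>n. bind_pmf (Qn n) (del_chan d)"] by simp
  also have "\<dots> \<le> Hp b (bind_pmf pN (\<lambda>n. map_pmf (Pair n) (bind_pmf (Qn n) (del_chan d))))"
    by (rule Hp_map_le[OF finite_joint[OF fN fB] b])
  also have "\<dots> = Hp b pN + E pN (\<lambda>n. Hp b (bind_pmf (Qn n) (del_chan d)))"
    by (rule Hp_chain[OF fN fB b])
  finally have h1: "Hp b (bind_pmf Q (del_chan d)) \<le> Hp b pN + E pN (\<lambda>n. Hp b (bind_pmf (Qn n) (del_chan d)))" .
  have h2: "E Q (\<lambda>x. Hp b (del_chan d x)) = E pN (\<lambda>n. E (Qn n) (\<lambda>x. Hp b (del_chan d x)))"
    unfolding Qeq[symmetric] by (rule E_bind[OF fN fQn])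
  show ?thesis using h1 h2 unfolding mic_def Qn_def pN_def
    by (simp add: E_diff)
qed

lemma mic_map_inj:
  assumes fQ: "finite (set_pmf Q)" and b: "b > 1" and inj: "inj_on g S"
    and sub: "\<And>x. x \<in> set_pmf Q \<Longrightarrow> set x \<subseteq> S"
  shows "mic b d (map_pmf (map g) Q) = mic b d Q"
proof -
  have injl: "inj_on (map g) {y. set y \<subseteq> S}"
    by (rule inj_on_mapI, rule inj_on_subset[OF inj]) auto
  have fB: "finite (set_pmf (bind_pmf Q (del_chan d)))" by (rule finite_set_bind[OF fQ del_finite])
  have "bind_pmf (map_pmf (map g) Q) (del_chan d) = map_pmf (map g) (bind_pmf Q (del_chan d))"
    by (simp add: bind_map_pmf map_bind_pmf del_map)
  moreover have "Hp b (map_pmf (map g) (bind_pmf Q (del_chan d))) = Hp b (bind_pmf Q (del_chan d))"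
  proof (rule Hp_map_inj[OF fB b], rule inj_on_subset[OF injl])
    show "set_pmf (bind_pmf Q (del_chan d)) \<subseteq> {y. set y \<subseteq> S}"
      using sub del_set by fastforce
  qed
  moreover have "E (map_pmf (map g) Q) (\<lambda>x. Hp b (del_chan d x)) = E Q (\<lambda>x. Hp b (del_chan d x))"
  proof -
    have "E (map_pmf (map g) Q) (\<lambda>x. Hp b (del_chan d x)) = E Q (\<lambda>x. Hp b (del_chan d (map g x)))"
      by (rule E_map[OF fQ])
    also have "\<dots> = E Q (\<lambda>x. Hp b (del_chan d x))"
    proof (rule E_cong)
      fix x assume x: "x \<in> set_pmf Q"
      have "Hp b (del_chan d (map g x)) = Hp b (map_pmf (map g) (del_chan d x))" by (simp add: del_map)
      also have "\<dots> = Hp b (del_chan d x)"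
      proof (rule Hp_map_inj[OF del_finite b], rule inj_on_subset[OF injl])
        show "set_pmf (del_chan d x) \<subseteq> {y. set y \<subseteq> S}" using sub[OF x] del_set by fastforce
      qed
      finally show "Hp b (del_chan d (map g x)) = Hp b (del_chan d x)" .
    qed
    finally show ?thesis .
  qed
  ultimately show ?thesis unfolding mic_def by simp
qed

lemma subseq_k_lt: "j < k \<Longrightarrow> subseq_k j (filter (\<lambda>s. sublabel s < k) y) = subseq_k j y"
  unfolding subseq_k_def by (induction y) auto

lemma indep:
  assumes b: "b > 1"
  shows "Hp b (map_pmf (\<lambda>y. (subseq_k k y, map (\<lambda>j. subseq_k j y) [1..<k])) (del_chan d x))
       = Hp b (map_pmf (subseq_k k) (del_chan d x)) + Hp b (map_pmf (\<lambda>y. map (\<lambda>j. subseq_k j y) [1..<k]) (del_chan d x))"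
proof -
  define P1 where "P1 = (\<lambda>s. sublabel s = k)"
  define P2 where "P2 = (\<lambda>s. sublabel s < k)"
  define C'' where "C'' = (\<lambda>v. map (\<lambda>j. subseq_k j v) [1..<k])"
  have C': "map (\<lambda>j. subseq_k j y) [1..<k] = C'' (filter P2 y)" for y
    unfolding C''_def P2_def by (rule map_cong[OF refl]) (simp add: subseq_k_lt)
  have B': "subseq_k k y = filter P1 y" for y unfolding subseq_k_def P1_def ..
  have "map_pmf (\<lambda>y. (subseq_k k y, map (\<lambda>j. subseq_k j y) [1..<k])) (del_chan d x)
      = map_pmf (\<lambda>(u, v). (u, C'' v)) (map_pmf (\<lambda>y. (filter P1 y, filter P2 y)) (del_chan d x))"
    unfolding C' B' by (simp add: map_pmf_comp)
  also have "\<dots> = map_pmf (\<lambda>(u, v). (u, C'' v)) (pair_pmf (del_chan d (filter P1 x)) (del_chan d (filter P2 x)))"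
    by (subst del_split) (auto simp: P1_def P2_def)
  also have "\<dots> = pair_pmf (del_chan d (filter P1 x)) (map_pmf C'' (del_chan d (filter P2 x)))"
    using map_pair[of "\<lambda>u. u" C'' "del_chan d (filter P1 x)" "del_chan d (filter P2 x)"] by simp
  finally have eq: "map_pmf (\<lambda>y. (subseq_k k y, map (\<lambda>j. subseq_k j y) [1..<k])) (del_chan d x)
      = pair_pmf (del_chan d (filter P1 x)) (map_pmf C'' (del_chan d (filter P2 x)))" .
  have m1: "map_pmf (subseq_k k) (del_chan d x) = del_chan d (filter P1 x)"
    unfolding B'[abs_def] by (rule del_filter)
  have m2: "map_pmf (\<lambda>y. map (\<lambda>j. subseq_k j y) [1..<k]) (del_chan d x) = map_pmf C'' (del_chan d (filter P2 x))"
    unfolding C' del_filter[symmetric] by (simp add: map_pmf_comp)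
  show ?thesis unfolding eq m1 m2 by (rule Hp_pair) (auto simp: del_finite b)
qed

lemma sublabel_range: "s \<in> {1..2*K} \<Longrightarrow> sublabel s \<in> {1..K}"
  unfolding sublabel_def by auto

lemma subseq_inj:
  "set xs \<subseteq> {1..2*K} \<Longrightarrow> set ys \<subseteq> {1..2*K} \<Longrightarrow> labels xs = labels ys \<Longrightarrow>
   (\<forall>j\<in>{1..K}. subseq_k j xs = subseq_k j ys) \<Longrightarrow> xs = ys"
proof (induction xs arbitrary: ys)
  case Nil then show ?case by (simp add: labels_def)
next
  case (Cons x xs)
  obtain y ys' where ys: "ys = y # ys'" using Cons.prems(3) by (cases ys) (auto simp: labels_def)
  have lab: "sublabel x = sublabel y" "labels xs = labels ys'" using Cons.prems(3) ys by (auto simp: labels_def)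
  have j: "sublabel x \<in> {1..K}" using Cons.prems(1) sublabel_range[of x K] by simp
  have "subseq_k (sublabel x) (x # xs) = subseq_k (sublabel x) (y # ys')"
    using Cons.prems(4) j ys by blast
  then have xy: "x = y" and t: "subseq_k (sublabel x) xs = subseq_k (sublabel x) ys'"
    using lab by (auto simp: subseq_k_def)
  have "\<forall>j\<in>{1..K}. subseq_k j xs = subseq_k j ys'"
  proof
    fix j assume jK: "j \<in> {1..K}"
    show "subseq_k j xs = subseq_k j ys'"
    proof (cases "j = sublabel x")
      case True then show ?thesis using t by simp
    next
      case False
      have "subseq_k j (x # xs) = subseq_k j (y # ys')" using Cons.prems(4) jK ys by blast
      then show ?thesis using False lab by (simp add: subseq_k_def)
    qed
  qed
  then have "xs = ys'" using Cons.IH[of ys'] Cons.prems(1,2) lab ys by simp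
  then show ?case using xy ys by simp
qed


lemma sublabel_k: "sublabel s = k \<Longrightarrow> s = 2 * k - 1 \<or> s = 2 * k"
  unfolding sublabel_def by presburger

theorem lemma1:
  fixes K N k :: nat and d b :: real and P :: "nat list pmf"
  assumes "K \<ge> 1" and "N \<ge> 1"
    and "0 \<le> d" and "d \<le> 1"
    and "b > 1"
    and "set_pmf P \<subseteq> {xs. length xs = N \<and> set xs \<subseteq> {1..2*K}}"
    and "1 \<le> k" and "k \<le> K"
  shows "cond_mutual_info b (chan_joint d P)
           (\<lambda>(x, y). (map (\<lambda>j. subseq_k j x) [1..<K+1], labels x))
           (\<lambda>(x, y). subseq_k k y)
           (\<lambda>(x, y). map (\<lambda>j. subseq_k j y) [1..<k])
         \<le> measure_pmf.expectation P (\<lambda>x. real (length (subseq_k k x))) * C2 b d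
           + 2 * log b (real N + 1)"
proof -
  note b = \<open>b > 1\<close>
  note supp = \<open>set_pmf P \<subseteq> {xs. length xs = N \<and> set xs \<subseteq> {1..2*K}}\<close>
  define J where "J = chan_joint d P"
  define Af where "Af = (\<lambda>x. (map (\<lambda>j. subseq_k j x) [1..<K+1], labels x))"
  define B' where "B' = subseq_k k"
  define C' where "C' = (\<lambda>y. map (\<lambda>j. subseq_k j y) [1..<k])"
  define A where "A = (\<lambda>w::nat list \<times> nat list. Af (fst w))"
  define B where "B = (\<lambda>w::nat list \<times> nat list. B' (snd w))"
  define C where "C = (\<lambda>w::nat list \<times> nat list. C' (snd w))"
  have eqA: "(\<lambda>(x, y). (map (\<lambda>j. subseq_k j x) [1..<K+1], labels x)) = A"
    unfolding A_def Af_def by auto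
  have eqB: "(\<lambda>(x::nat list, y). subseq_k k y) = B" unfolding B_def B'_def by auto
  have eqC: "(\<lambda>(x::nat list, y). map (\<lambda>j. subseq_k j y) [1..<k]) = C" unfolding C_def C'_def by auto
  have fP: "finite (set_pmf P)"
    by (rule finite_subset[OF _ finite_lists_length_eq[of "{1..2*K}" N]]) (use supp in auto)
  have Jeq: "J = bind_pmf P (\<lambda>x. map_pmf (Pair x) (del_chan d x))"
    unfolding J_def by (rule chan_joint_eq)
  have fJ: "finite (set_pmf J)" unfolding Jeq by (rule finite_joint[OF fP del_finite])
  have setJ: "fst w \<in> set_pmf P" if "w \<in> set_pmf J" for w
    using that unfolding Jeq by auto
  have injA: "x = x'" if "x \<in> set_pmf P" "x' \<in> set_pmf P" "Af x = Af x'" for x x'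
  proof -
    have h1: "set x \<subseteq> {1..2*K}" "set x' \<subseteq> {1..2*K}" using that(1,2) supp by auto
    have h2: "labels x = labels x'" using that(3) unfolding Af_def by simp
    have "map (\<lambda>j. subseq_k j x) [1..<K+1] = map (\<lambda>j. subseq_k j x') [1..<K+1]"
      using that(3) unfolding Af_def by simp
    then have h3: "\<forall>j\<in>{1..K}. subseq_k j x = subseq_k j x'"
      unfolding map_eq_conv by auto
    show ?thesis by (rule subseq_inj[OF h1 h2 h3])
  qed
  have cmi: "cond_mutual_info b J A B C =
    Hp b (map_pmf (\<lambda>w. (A w, C w)) J) + Hp b (map_pmf (\<lambda>w. (B w, C w)) J)
    - Hp b (map_pmf (\<lambda>w. (A w, B w, C w)) J) - Hp b (map_pmf C J)"
    by (rule cmi_eq[OF fJ])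
  have HAC: "Hp b (map_pmf (\<lambda>w. (A w, C w)) J) = Hp b (map_pmf (\<lambda>w. (fst w, C w)) J)"
  proof (rule Hp_cong_fun[OF fJ b])
    fix w w' assume "w \<in> set_pmf J" "w' \<in> set_pmf J"
    then show "((fst w', C w') = (fst w, C w)) = ((A w', C w') = (A w, C w))"
      using injA[of "fst w'" "fst w"] setJ unfolding A_def by auto
  qed
  have HABC: "Hp b (map_pmf (\<lambda>w. (A w, B w, C w)) J) = Hp b (map_pmf (\<lambda>w. (fst w, B w, C w)) J)"
  proof (rule Hp_cong_fun[OF fJ b])
    fix w w' assume "w \<in> set_pmf J" "w' \<in> set_pmf J"
    then show "((fst w', B w', C w') = (fst w, B w, C w)) = ((A w', B w', C w') = (A w, B w, C w))"
      using injA[of "fst w'" "fst w"] setJ unfolding A_def by auto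
  qed
  have fmap: "finite (set_pmf (map_pmf g (del_chan d x)))" for g x by (simp add: del_finite)
  have HXBC: "Hp b (map_pmf (\<lambda>w. (fst w, B w, C w)) J)
      = Hp b P + (E P (\<lambda>x. Hp b (map_pmf B' (del_chan d x))) + E P (\<lambda>x. Hp b (map_pmf C' (del_chan d x))))"
  proof -
    have "map_pmf (\<lambda>w. (fst w, B w, C w)) J = bind_pmf P (\<lambda>x. map_pmf (Pair x) (map_pmf (\<lambda>y. (B' y, C' y)) (del_chan d x)))"
      unfolding Jeq B_def C_def by (rule joint_map)
    then have "Hp b (map_pmf (\<lambda>w. (fst w, B w, C w)) J) = Hp b P + E P (\<lambda>x. Hp b (map_pmf (\<lambda>y. (B' y, C' y)) (del_chan d x)))"
      by (simp add: Hp_chain[OF fP fmap b])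
    also have "E P (\<lambda>x. Hp b (map_pmf (\<lambda>y. (B' y, C' y)) (del_chan d x)))
       = E P (\<lambda>x. Hp b (map_pmf B' (del_chan d x)) + Hp b (map_pmf C' (del_chan d x)))"
      unfolding B'_def C'_def by (rule E_cong) (rule indep[OF b])
    finally show ?thesis by (simp add: E_add)
  qed
  have HXC: "Hp b (map_pmf (\<lambda>w. (fst w, C w)) J) = Hp b P + E P (\<lambda>x. Hp b (map_pmf C' (del_chan d x)))"
  proof -
    have "map_pmf (\<lambda>w. (fst w, C w)) J = bind_pmf P (\<lambda>x. map_pmf (Pair x) (map_pmf C' (del_chan d x)))"
      unfolding Jeq C_def by (rule joint_map)
    then show ?thesis by (simp add: Hp_chain[OF fP fmap b])
  qed
  have HBC: "Hp b (map_pmf (\<lambda>w. (B w, C w)) J) \<le> Hp b (map_pmf B J) + Hp b (map_pmf C J)"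
    by (rule subadd[OF fJ b])
  define Qk where "Qk = map_pmf (subseq_k k) P"
  have fQk: "finite (set_pmf Qk)" unfolding Qk_def using fP by simp
  have HB: "Hp b (map_pmf B J) = Hp b (bind_pmf Qk (del_chan d))"
  proof -
    have "map_pmf B J = bind_pmf P (\<lambda>x. map_pmf B' (del_chan d x))"
      unfolding Jeq B_def by (rule joint_map_snd)
    also have "\<dots> = bind_pmf Qk (del_chan d)"
      unfolding Qk_def B'_def subseq_k_def by (simp add: del_filter bind_map_pmf)
    finally show ?thesis by simp
  qed
  have EB: "E P (\<lambda>x. Hp b (map_pmf B' (del_chan d x))) = E Qk (\<lambda>z. Hp b (del_chan d z))"
    unfolding Qk_def B'_def subseq_k_def by (simp add: del_filter E_map[OF fP])
  have step1: "cond_mutual_info b J A B C \<le> mic b d Qk"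
    unfolding cmi HAC HABC HXBC HXC mic_def using HBC HB EB by linarith
  define pN where "pN = map_pmf length Qk"
  define Qn where "Qn = (\<lambda>n. cond_pmf Qk {z. length z = n})"
  have step2: "mic b d Qk \<le> Hp b pN + E pN (\<lambda>n. mic b d (Qn n))"
    unfolding pN_def Qn_def by (rule mic_cond[OF fQk b])
  have fN: "finite (set_pmf pN)" unfolding pN_def using fQk by simp
  have nN: "n \<le> N" if "n \<in> set_pmf pN" for n
  proof -
    have "n \<in> (\<lambda>x. length (subseq_k k x)) ` set_pmf P"
      using that unfolding pN_def Qk_def by (simp add: image_image)
    then obtain x where x: "x \<in> set_pmf P" "n = length (subseq_k k x)" by blast
    have "length (subseq_k k x) \<le> length x" unfolding subseq_k_def by simp
    then show ?thesis using x supp by auto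
  qed
  have bound_n: "mic b d (Qn n) \<le> real n * C2 b d + log b (real N + 1)" if n: "n \<in> set_pmf pN" for n
  proof -
    have ne: "set_pmf Qk \<inter> {z. length z = n} \<noteq> {}" using n unfolding pN_def by auto
    have setQn: "set_pmf (Qn n) = set_pmf Qk \<inter> {z. length z = n}"
      unfolding Qn_def by (rule set_cond_pmf[OF ne])
    have fQn: "finite (set_pmf (Qn n))" using setQn fQk by simp
    have elems: "set z \<subseteq> {s. sublabel s = k}" if "z \<in> set_pmf (Qn n)" for z
      using that unfolding setQn Qk_def subseq_k_def by auto
    define g where "g = (\<lambda>s::nat. s = 2 * k)"
    have inj: "inj_on g {s. sublabel s = k}"
    proof (rule inj_onI)
      fix s s' assume "s \<in> {s. sublabel s = k}" "s' \<in> {s. sublabel s = k}" "g s = g s'"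
      then show "s = s'" using sublabel_k[of s k] sublabel_k[of s' k] \<open>1 \<le> k\<close> unfolding g_def by auto
    qed
    have "mic b d (Qn n) = mic b d (map_pmf (map g) (Qn n))"
      by (rule mic_map_inj[OF fQn b inj elems, symmetric])
    also have "\<dots> \<le> real n * C2 b d + log b (real n + 1)"
    proof (rule cap_bound[OF b])
      show "map_pmf (map g) (Qn n) \<in> Sn n" unfolding Sn_def using setQn by auto
    qed
    also have "log b (real n + 1) \<le> log b (real N + 1)"
      using nN[OF n] b by simp
    finally show ?thesis by simp
  qed
  have step3: "E pN (\<lambda>n. mic b d (Qn n)) \<le> E pN (\<lambda>n. real n) * C2 b d + log b (real N + 1)"
  proof -
    have "E pN (\<lambda>n. mic b d (Qn n)) \<le> E pN (\<lambda>n. real n * C2 b d + log b (real N + 1))"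
      by (rule E_mono) (rule bound_n)
    also have "\<dots> = E pN (\<lambda>n. real n) * C2 b d + log b (real N + 1)"
      by (simp add: E_add E_const[OF fN] E_cmult[of pN "C2 b d" "\<lambda>n. real n", simplified mult.commute])
    finally show ?thesis .
  qed
  have step4: "Hp b pN \<le> log b (real N + 1)"
  proof -
    have "Hp b pN \<le> log b (real (card {0..N}))"
      by (rule Hp_le_card[OF _ _ b]) (use nN in auto)
    then show ?thesis by (simp add: add.commute)
  qed
  have EN: "E pN (\<lambda>n. real n) = measure_pmf.expectation P (\<lambda>x. real (length (subseq_k k x)))"
    unfolding pN_def Qk_def map_pmf_comp by (simp add: E_map[OF fP] E_integral[OF fP])
  have "cond_mutual_info b J A B C \<le> measure_pmf.expectation P (\<lambda>x. real (length (subseq_k k x))) * C2 b d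
           + 2 * log b (real N + 1)"
    using step1 step2 step3[unfolded EN] step4 by linarith
  then show ?thesis unfolding eqA eqB eqC J_def .
qed


end
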